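(* Order $S_n$ by $v\le w$ iff $\iota_k(v)\le\iota_k(w)$ for all $k$. Then $w\in S_n$ covers $v\in S_n$ in this order if and only if there exist $i<k$ such that: $w(j)=v(j)$ for all $j\notin\{i,k\}$; $v(i)=w(k)<w(i)=v(k)$; and $w(j)<w(k)$ for every $i<j<k$.
   Context: Permutations are written in one-line notation. The inversion table of $w\in S_n$ is $\iota(w)=(\iota_1(w),\dots,\iota_n(w))$ with $\iota_k(w)=\#\{i<w^{-1}(k):w(i)>k\}$. *)

theory Defs
  imports "HOL-Combinatorics.Permutations"
begin

text \<open>Permutations of {1..n} are functions nat => nat with p permutes {1..n}
  (identity outside {1..n}). One-line notation: w(1),...,w(n).\<close>

definition inv_table :: "nat \<Rightarrow> (nat \<Rightarrow> nat) \<Rightarrow> nat \<Rightarrow> nat" where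
  "inv_table n w k = card {i \<in> {1..n}. i < inv w k \<and> w i > k}"

definition inv_le :: "nat \<Rightarrow> (nat \<Rightarrow> nat) \<Rightarrow> (nat \<Rightarrow> nat) \<Rightarrow> bool" where
  "inv_le n v w \<longleftrightarrow> (\<forall>k\<in>{1..n}. inv_table n v k \<le> inv_table n w k)"

definition inv_less :: "nat \<Rightarrow> (nat \<Rightarrow> nat) \<Rightarrow> (nat \<Rightarrow> nat) \<Rightarrow> bool" where
  "inv_less n v w \<longleftrightarrow> inv_le n v w \<and> v \<noteq> w"

definition inv_covers :: "nat \<Rightarrow> (nat \<Rightarrow> nat) \<Rightarrow> (nat \<Rightarrow> nat) \<Rightarrow> bool" where
  "inv_covers n w v \<longleftrightarrow> inv_less n v w \<and>
     \<not> (\<exists>u. u permutes {1..n} \<and> inv_less n v u \<and> inv_less n u w)"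

end

theory Submission
  imports Defs
begin


definition tab :: "nat \<Rightarrow> (nat \<Rightarrow> nat) \<Rightarrow> nat \<Rightarrow> nat" where
  "tab n x k = card {b \<in> {1..n}. k < b \<and> x b < x k}"

lemma table_alt:
  assumes v: "v permutes {1..n}"
  shows "inv_table n v k = tab n (inv v) k"
proof -
  have "bij_betw v {i \<in> {1..n}. i < inv v k \<and> v i > k} {b \<in> {1..n}. k < b \<and> inv v b < inv v k}"
    unfolding bij_betw_def
  proof
    show "inj_on v {i \<in> {1..n}. i < inv v k \<and> k < v i}"
      using permutes_inj_on[OF v] .
    show "v ` {i \<in> {1..n}. i < inv v k \<and> k < v i} = {b \<in> {1..n}. k < b \<and> inv v b < inv v k}"
    proof safe
      fix b assume "b \<in> {1..n}" "k < b" "inv v b < inv v k"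
      then show "b \<in> v ` {i \<in> {1..n}. i < inv v k \<and> k < v i}"
        using permutes_inverses[OF v] permutes_in_image[OF permutes_inv[OF v]]
        by (metis (mono_tags, lifting) image_eqI mem_Collect_eq)
    qed (use permutes_inverses[OF v] permutes_in_image[OF v] in auto)
  qed
  then show ?thesis unfolding inv_table_def tab_def by (rule bij_betw_same_card)
qed

lemma tab_inj:
  assumes x: "x permutes {1..n}" and y: "y permutes {1..n}"
    and eq: "\<forall>k\<in>{1..n}. tab n x k = tab n y k"
  shows "x = y"
proof -
  have ord: "1 \<le> k \<longrightarrow> (\<forall>a\<in>{k..n}. \<forall>b\<in>{k..n}. x a < x b \<longleftrightarrow> y a < y b)" if "k \<le> n+1" for k
    using that
  proof (induction k rule: inc_induct)
    case base
    then show ?case by auto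
  next
    case (step k)
    have IH: "\<forall>a\<in>{Suc k..n}. \<forall>b\<in>{Suc k..n}. x a < x b \<longleftrightarrow> y a < y b" using step by auto
    show ?case
    proof (intro impI)
      assume k1: "1 \<le> k"
      have True: "k \<le> n" using step by simp
      define Px where "Px = {b \<in> {1..n}. k < b \<and> x b < x k}"
      define Py where "Py = {b \<in> {1..n}. k < b \<and> y b < y k}"
      have cc: "card Px = card Py" using eq k1 True unfolding Px_def Py_def tab_def by auto
      have xi: "x a = x b \<Longrightarrow> a = b" for a b using permutes_inj[OF x] by (meson injD)
      have yi: "y a = y b \<Longrightarrow> a = b" for a b using permutes_inj[OF y] by (meson injD)
      have PP: "Px = Py"
      proof (rule ccontr)
        assume ne: "Px \<noteq> Py"
        have fin: "finite Px" "finite Py" unfolding Px_def Py_def by auto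
        have "\<exists>b. b \<in> Px - Py"
        proof (rule ccontr)
          assume "\<not> ?thesis" then have "Px \<subseteq> Py" by auto
          then have "Px = Py" using cc fin by (simp add: card_subset_eq)
          then show False using ne by simp
        qed
        then obtain b where b: "b \<in> Px" "b \<notin> Py" by auto
        have "\<exists>c. c \<in> Py - Px"
        proof (rule ccontr)
          assume "\<not> ?thesis" then have "Py \<subseteq> Px" by auto
          then have "Py = Px" using cc fin by (simp add: card_subset_eq)
          then show False using ne by simp
        qed
        then obtain c where c: "c \<in> Py" "c \<notin> Px" by auto
        have bS: "b \<in> {Suc k..n}" and cS: "c \<in> {Suc k..n}" using b c unfolding Px_def Py_def by auto
        have xbk: "x b < x k" using b unfolding Px_def by auto
        have "c \<noteq> k" using cS by auto
        then have "x c \<noteq> x k" using xi by blast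
        moreover have "\<not> x c < x k" using c cS unfolding Px_def by auto
        ultimately have "x c > x k" by simp
        with xbk have "x b < x c" by simp
        then have "y b < y c" using IH bS cS by blast
        moreover have "y c < y k" using c unfolding Py_def by auto
        moreover have "y b \<noteq> y k" using yi \<open>b \<in> {Suc k..n}\<close> by (metis Suc_n_not_le_n atLeastAtMost_iff)
        moreover have "\<not> y b < y k" using b bS unfolding Py_def by auto
        ultimately show False by simp
      qed
      have kk: "\<forall>b\<in>{Suc k..n}. x b < x k \<longleftrightarrow> y b < y k"
      proof
        fix b assume bS: "b \<in> {Suc k..n}"
        have "b \<in> Px \<longleftrightarrow> b \<in> Py" using PP by simp
        then show "x b < x k \<longleftrightarrow> y b < y k" using bS k1 unfolding Px_def Py_def by auto
      qed
      have kk2: "\<forall>b\<in>{Suc k..n}. x k < x b \<longleftrightarrow> y k < y b"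
      proof
        fix b assume bS: "b \<in> {Suc k..n}"
        then have "b \<noteq> k" by auto
        then have "x b \<noteq> x k" "y b \<noteq> y k" using xi yi by blast+
        moreover have "x b < x k \<longleftrightarrow> y b < y k" using kk bS by blast
        ultimately show "x k < x b \<longleftrightarrow> y k < y b" by auto
      qed
      show "\<forall>a\<in>{k..n}. \<forall>b\<in>{k..n}. x a < x b \<longleftrightarrow> y a < y b"
      proof (intro ballI)
        fix a b assume a: "a \<in> {k..n}" and b: "b \<in> {k..n}"
        show "x a < x b \<longleftrightarrow> y a < y b"
        proof (cases "a = k")
          case True
          then show ?thesis using kk2 b by (cases "b = k") auto
        next
          case False
          then have a': "a \<in> {Suc k..n}" using a by auto
          then show ?thesis using kk IH b by (cases "b = k") auto
        qed
      qed
    qed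
  qed
  have all: "\<forall>a\<in>{1..n}. \<forall>b\<in>{1..n}. x a < x b \<longleftrightarrow> y a < y b" using ord[of 1] by auto
  show ?thesis
  proof
    fix a show "x a = y a"
    proof (cases "a \<in> {1..n}")
      case False then show ?thesis using permutes_not_in[OF x] permutes_not_in[OF y] by simp
    next
      case True
      show ?thesis
      proof (rule ccontr)
        assume ne: "x a \<noteq> y a"
        have rk: "card {b \<in> {1..n}. z b < z a} = z a - 1" if z: "z permutes {1..n}" for z
        proof -
          have za: "z a \<in> {1..n}" using True permutes_in_image[OF z] by simp
          have "bij_betw z {b \<in> {1..n}. z b < z a} {1..<z a}"
            unfolding bij_betw_def
          proof
            show "inj_on z {b \<in> {1..n}. z b < z a}" using permutes_inj_on[OF z] .
            show "z ` {b \<in> {1..n}. z b < z a} = {1..<z a}"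
            proof safe
              fix c assume c: "c \<in> {1..<z a}"
              then have "c \<in> {1..n}" using za by auto
              then have "inv z c \<in> {1..n}" using permutes_in_image[OF permutes_inv[OF z]] by simp
              then show "c \<in> z ` {b \<in> {1..n}. z b < z a}"
                using c permutes_inverses[OF z] by (metis (mono_tags, lifting) atLeastLessThan_iff image_eqI mem_Collect_eq)
            qed (use permutes_in_image[OF z] in auto)
          qed
          then show ?thesis by (simp add: bij_betw_same_card)
        qed
        have "{b \<in> {1..n}. x b < x a} = {b \<in> {1..n}. y b < y a}" using all True by blast
        then have "x a - 1 = y a - 1" using rk[OF x] rk[OF y] by simp
        moreover have "x a \<ge> 1" "y a \<ge> 1" using True permutes_in_image[OF x] permutes_in_image[OF y] by auto
        ultimately show False using ne by simp
      qed
    qed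
  qed
qed

lemma card_two:
  assumes "finite A" "a \<noteq> b"
  shows "card A = card (A - {a,b}) + (if a \<in> A then 1 else 0) + (if b \<in> A then 1 else 0)"
proof -
  have "card A = card (A - {a,b}) + card (A \<inter> {a,b})"
    using assms(1) by (metis card_mono finite_Int le_add_diff_inverse2 inf_le1 Int_commute card_Diff_subset_Int)
  moreover have "card (A \<inter> {a,b}) = (if a \<in> A then 1 else 0) + (if b \<in> A then 1 else 0)"
    using assms(2) by (cases "a \<in> A"; cases "b \<in> A") (auto simp: Int_insert_right)
  ultimately show ?thesis by simp
qed

lemma swap_tab:
  assumes v: "v permutes {1..n}" and p: "p \<in> {1..n}" and q: "q \<in> {1..n}" and pq: "p < q"
    and ab: "v p < v q" and mid: "\<forall>j. p < j \<and> j < q \<longrightarrow> v j < v p"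
  shows "inv_table n (v \<circ> transpose p q) c = inv_table n v c + (if c = v p then 1 else 0)"
proof -
  define u where "u = v \<circ> transpose p q"
  define a where "a = v p"
  define b where "b = v q"
  define x where "x = inv v"
  have u: "u permutes {1..n}" unfolding u_def by (rule permutes_compose[OF permutes_swap_id[OF p q] v])
  have xa: "x a = p" and xb: "x b = q" unfolding x_def a_def b_def using permutes_inverses[OF v] by auto
  have abne: "a < b" using ab a_def b_def by simp
  have y: "inv u d = (if d = a then q else if d = b then p else x d)" for d
    unfolding permutes_inv_eq[OF u] using permutes_inverses[OF v] pq
    by (auto simp: u_def a_def b_def x_def transpose_def)
  have xnot: "d \<noteq> a \<Longrightarrow> d \<noteq> b \<Longrightarrow> x d \<noteq> p \<and> x d \<noteq> q" for d
    using permutes_inverses[OF v] unfolding x_def a_def b_def by metis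
  have midx: "d \<in> {1..n} \<Longrightarrow> p < x d \<Longrightarrow> x d < q \<Longrightarrow> d < a" for d
    using mid permutes_inverses[OF v] unfolding x_def a_def by metis
  define A where "A = {d \<in> {1..n}. c < d \<and> inv u d < inv u c}"
  define B where "B = {d \<in> {1..n}. c < d \<and> x d < x c}"
  have fA: "finite A" and fB: "finite B" unfolding A_def B_def by auto
  have AB: "A - {a,b} = B - {a,b}"
  proof -
    have "d \<in> A \<longleftrightarrow> d \<in> B" if "d \<noteq> a" "d \<noteq> b" for d
    proof -
      have yd: "inv u d = x d" using y that by simp
      have "(c < d \<and> inv u d < inv u c) \<longleftrightarrow> (c < d \<and> x d < x c)" if "d \<in> {1..n}"
      proof (cases "c = a \<or> c = b")
        case True
        then have "inv u c \<in> {p,q}" "x c \<in> {p,q}" using y xa xb by auto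
        have "c < d \<Longrightarrow> \<not> (p < x d \<and> x d < q)" using midx[OF that] True abne by auto
        then show ?thesis using True y xa xb yd xnot[OF \<open>d \<noteq> a\<close> \<open>d \<noteq> b\<close>] abne pq by auto
      next
        case False
        then show ?thesis using y yd by simp
      qed
      then show ?thesis unfolding A_def B_def by auto
    qed
    then show ?thesis by auto
  qed
have aS: "a \<in> {1..n}" "b \<in> {1..n}" unfolding a_def b_def using p q permutes_in_image[OF v] by auto
  have cnt: "(if a \<in> A then 1 else 0) + (if b \<in> A then 1 else 0) =
      (if a \<in> B then 1 else 0) + (if b \<in> B then 1 else 0) + (if c = a then 1 else (0::nat))"
  proof (cases "c = a \<or> c = b")
    case True
    then show ?thesis unfolding A_def B_def using y xa xb abne pq aS by auto
  next
    case False
    then have yc: "inv u c = x c" using y by simp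
    show ?thesis
    proof (cases "c \<in> {1..n}")
      case False
      then have "x c = c" using permutes_not_in[OF permutes_inv[OF v]] x_def by simp
      then have "c > n \<or> x c = 0" using False by auto
      then show ?thesis unfolding A_def B_def using aS yc \<open>\<not> (c = a \<or> c = b)\<close> by auto
    next
      case True
      have xcn: "x c \<noteq> p" "x c \<noteq> q" using xnot \<open>\<not> (c = a \<or> c = b)\<close> by auto
      show ?thesis
      proof (cases "p < x c \<and> x c < q")
        case True
        then have "c < a" using midx \<open>c \<in> {1..n}\<close> by auto
        then show ?thesis unfolding A_def B_def using True y yc xa xb abne aS \<open>\<not> (c = a \<or> c = b)\<close> by auto
      next
        case False
        then show ?thesis unfolding A_def B_def using xcn y yc xa xb abne aS pq \<open>\<not> (c = a \<or> c = b)\<close> by auto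
      qed
    qed
  qed
  have "card A = card B + (if c = a then 1 else 0)"
    using card_two[OF fA, of a b] card_two[OF fB, of a b] AB cnt abne by simp
  then have "inv_table n u c = inv_table n v c + (if c = a then 1 else 0)"
    using table_alt[OF u, of c] table_alt[OF v, of c] unfolding tab_def A_def B_def x_def by simp
  then show ?thesis unfolding u_def a_def .
qed

lemma table_inj:
  assumes v: "v permutes {1..n}" and w: "w permutes {1..n}"
    and eq: "\<forall>k\<in>{1..n}. inv_table n v k = inv_table n w k"
  shows "v = w"
proof -
  have "inv v = inv w"
    using tab_inj[OF permutes_inv[OF v] permutes_inv[OF w]] eq table_alt[OF v] table_alt[OF w] by simp
  then show ?thesis using inv_inv_eq[OF permutes_bij[OF v]] inv_inv_eq[OF permutes_bij[OF w]] by metis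
qed

lemma exists_larger:
  assumes v: "v permutes {1..n}" and w: "w permutes {1..n}" and a: "a \<in> {1..n}"
    and lt: "inv_table n v a < inv_table n w a"
  shows "\<exists>q. inv v a < q \<and> q \<le> n \<and> a < v q"
proof -
  have "tab n (inv w) a \<le> card {Suc a..n}"
    unfolding tab_def by (rule card_mono) auto
  then have lt2: "tab n (inv v) a < card {Suc a..n}" using lt table_alt[OF v] table_alt[OF w] by simp
  have "\<exists>b\<in>{Suc a..n}. \<not> inv v b < inv v a"
  proof (rule ccontr)
    assume "\<not> ?thesis"
    then have "{Suc a..n} \<subseteq> {b \<in> {1..n}. a < b \<and> inv v b < inv v a}" by auto
    then have "card {Suc a..n} \<le> tab n (inv v) a" unfolding tab_def by (intro card_mono) auto
    then show False using lt2 by simp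
  qed
  then obtain b where b: "b \<in> {Suc a..n}" "\<not> inv v b < inv v a" by auto
  have "inv v b \<noteq> inv v a" using b(1) permutes_inj[OF permutes_inv[OF v]] by (metis injD Suc_n_not_le_n atLeastAtMost_iff)
  then have "inv v a < inv v b" using b(2) by simp
  moreover have "inv v b \<le> n" using b(1) permutes_in_image[OF permutes_inv[OF v], of b] by auto
  moreover have "v (inv v b) = b" using permutes_inverses[OF v] by simp
  ultimately show ?thesis using b(1) by (intro exI[of _ "inv v b"]) auto
qed

theorem proposition3p1:
  fixes n :: nat and v w :: "nat \<Rightarrow> nat"
  assumes "v permutes {1..n}" and "w permutes {1..n}"
  shows "inv_covers n w v \<longleftrightarrow>
    (\<exists>i k. 1 \<le> i \<and> i < k \<and> k \<le> n \<and>
       (\<forall>j\<in>{1..n}. j \<notin> {i, k} \<longrightarrow> w j = v j) \<and>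
       v i = w k \<and> w k < w i \<and> w i = v k \<and>
       (\<forall>j. i < j \<and> j < k \<longrightarrow> w j < w k))"
proof
  note v = assms(1) and w = assms(2)
  assume cov: "inv_covers n w v"
  then have le: "inv_le n v w" and ne: "v \<noteq> w" unfolding inv_covers_def inv_less_def by auto
  have "\<exists>a\<in>{1..n}. inv_table n v a < inv_table n w a"
  proof (rule ccontr)
    assume "\<not> ?thesis"
    then have "\<forall>k\<in>{1..n}. inv_table n v k = inv_table n w k" using le unfolding inv_le_def by force
    then show False using table_inj[OF v w] ne by simp
  qed
  then obtain a where a: "a \<in> {1..n}" and alt: "inv_table n v a < inv_table n w a" by auto
  define p where "p = inv v a"
  have vp: "v p = a" unfolding p_def using permutes_inverses[OF v] by simp
  have pS: "p \<in> {1..n}" unfolding p_def using a permutes_in_image[OF permutes_inv[OF v]] by simp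
  have ex: "\<exists>q. p < q \<and> q \<le> n \<and> a < v q" using exists_larger[OF v w a alt] p_def by simp
  define q where "q = (LEAST q. p < q \<and> q \<le> n \<and> a < v q)"
  have qP: "p < q \<and> q \<le> n \<and> a < v q" unfolding q_def using LeastI_ex[OF ex] .
  have mid: "\<forall>j. p < j \<and> j < q \<longrightarrow> v j < v p"
  proof (intro allI impI)
    fix j assume j: "p < j \<and> j < q"
    then have "\<not> (p < j \<and> j \<le> n \<and> a < v j)" unfolding q_def using not_less_Least by blast
    then have "\<not> a < v j" using j qP by auto
    moreover have "v j \<noteq> a" using j vp permutes_inj[OF v] by (metis injD less_irrefl)
    ultimately show "v j < v p" using vp by simp
  qed
  have qS: "q \<in> {1..n}" using qP pS by auto
  define u where "u = v \<circ> transpose p q"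
  have u: "u permutes {1..n}" unfolding u_def by (rule permutes_compose[OF permutes_swap_id[OF pS qS] v])
  have tu: "inv_table n u c = inv_table n v c + (if c = a then 1 else 0)" for c
    unfolding u_def using swap_tab[OF v pS qS _ _ mid] qP vp by simp
  have "u \<noteq> v"
  proof
    assume "u = v"
    then have "u p = v p" by simp
    then show False using qP vp unfolding u_def by simp
  qed
  then have vu: "inv_less n v u" unfolding inv_less_def inv_le_def using tu by auto
  have uw: "inv_le n u w" unfolding inv_le_def
  proof
    fix c assume c: "c \<in> {1..n}"
    show "inv_table n u c \<le> inv_table n w c"
      using tu[of c] alt le c unfolding inv_le_def by (cases "c = a") auto
  qed
  have "u = w"
  proof (rule ccontr)
    assume "u \<noteq> w"
    then have "inv_less n u w" using uw unfolding inv_less_def by simp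
    then show False using cov u vu unfolding inv_covers_def by blast
  qed
  then have wj: "w j = v (transpose p q j)" for j unfolding u_def by auto
  show "\<exists>i k. 1 \<le> i \<and> i < k \<and> k \<le> n \<and>
       (\<forall>j\<in>{1..n}. j \<notin> {i, k} \<longrightarrow> w j = v j) \<and>
       v i = w k \<and> w k < w i \<and> w i = v k \<and>
       (\<forall>j. i < j \<and> j < k \<longrightarrow> w j < w k)"
  proof (intro exI conjI)
    show "1 \<le> p" "p < q" "q \<le> n" using pS qP by auto
    show "\<forall>j\<in>{1..n}. j \<notin> {p, q} \<longrightarrow> w j = v j" using wj by (auto simp: transpose_def)
    show "v p = w q" "w p = v q" using wj by (auto simp: transpose_def)
    show "w q < w p" using wj qP vp by (auto simp: transpose_def)
    show "\<forall>j. p < j \<and> j < q \<longrightarrow> w j < w q" using wj mid by (auto simp: transpose_def)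
  qed
next
  note v = assms(1) and w = assms(2)
  assume "\<exists>i k. 1 \<le> i \<and> i < k \<and> k \<le> n \<and>
       (\<forall>j\<in>{1..n}. j \<notin> {i, k} \<longrightarrow> w j = v j) \<and>
       v i = w k \<and> w k < w i \<and> w i = v k \<and>
       (\<forall>j. i < j \<and> j < k \<longrightarrow> w j < w k)"
  then obtain i k where ik: "1 \<le> i" "i < k" "k \<le> n"
    and off: "\<forall>j\<in>{1..n}. j \<notin> {i, k} \<longrightarrow> w j = v j"
    and e1: "v i = w k" and e2: "w k < w i" and e3: "w i = v k"
    and btw: "\<forall>j. i < j \<and> j < k \<longrightarrow> w j < w k" by blast
  have iS: "i \<in> {1..n}" and kS: "k \<in> {1..n}" using ik by auto
  have wdef: "w = v \<circ> transpose i k"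
  proof
    fix j
    show "w j = (v \<circ> transpose i k) j"
    proof (cases "j \<in> {1..n}")
      case False
      then have "j \<noteq> i" "j \<noteq> k" using iS kS by auto
      then show ?thesis using False permutes_not_in[OF v] permutes_not_in[OF w] by (simp add: transpose_def)
    next
      case True
      then show ?thesis
        proof (cases "j = i \<or> j = k")
          case True
          then show ?thesis using e1 e3 ik(2) by (auto simp: transpose_def)
        next
          case False
          then show ?thesis using off \<open>j \<in> {1..n}\<close> by (simp add: transpose_def)
        qed
    qed
  qed
  have mid: "\<forall>j. i < j \<and> j < k \<longrightarrow> v j < v i"
  proof (intro allI impI)
    fix j assume j: "i < j \<and> j < k"
    then have "j \<noteq> i" "j \<noteq> k" by auto
    then have "w j = v j" using wdef by (simp add: transpose_def)
    then show "v j < v i" using btw j e1 by auto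
  qed
  have tw: "inv_table n w c = inv_table n v c + (if c = v i then 1 else 0)" for c
    unfolding wdef using swap_tab[OF v iS kS ik(2) _ mid] e1 e2 e3 by simp
  have aS: "v i \<in> {1..n}" using iS permutes_in_image[OF v] by simp
  have "v \<noteq> w"
  proof
    assume "v = w"
    then show False using e2 e3 by simp
  qed
  then have vw: "inv_less n v w" unfolding inv_less_def inv_le_def using tw by auto
  have "\<not> (\<exists>u. u permutes {1..n} \<and> inv_less n v u \<and> inv_less n u w)"
  proof
    assume "\<exists>u. u permutes {1..n} \<and> inv_less n v u \<and> inv_less n u w"
    then obtain u where u: "u permutes {1..n}" and vu: "inv_less n v u" and uw: "inv_less n u w" by blast
    have lo: "inv_table n v c \<le> inv_table n u c" and hi: "inv_table n u c \<le> inv_table n w c"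
      if "c \<in> {1..n}" for c using vu uw that unfolding inv_less_def inv_le_def by auto
    have oth: "inv_table n u c = inv_table n v c" if "c \<in> {1..n}" "c \<noteq> v i" for c
      using lo[OF that(1)] hi[OF that(1)] tw[of c] that(2) by simp
    show False
    proof (cases "inv_table n u (v i) = inv_table n v (v i)")
      case True
      have "\<forall>c\<in>{1..n}. inv_table n u c = inv_table n v c"
      proof
        fix c assume c: "c \<in> {1..n}"
        show "inv_table n u c = inv_table n v c" using oth[OF c] True by (cases "c = v i") auto
      qed
      then have "u = v" by (rule table_inj[OF u v])
      then show False using vu unfolding inv_less_def by simp
    next
      case False
      then have "inv_table n u (v i) = inv_table n w (v i)" using lo[OF aS] hi[OF aS] tw[of "v i"] by simp
      have "\<forall>c\<in>{1..n}. inv_table n u c = inv_table n w c"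
      proof
        fix c assume c: "c \<in> {1..n}"
        show "inv_table n u c = inv_table n w c" using oth[OF c] tw[of c] \<open>inv_table n u (v i) = inv_table n w (v i)\<close> by (cases "c = v i") auto
      qed
      then have "u = w" by (rule table_inj[OF u w])
      then show False using uw unfolding inv_less_def by simp
    qed
  qed
  then show "inv_covers n w v" using vw unfolding inv_covers_def by simp
qed

end
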